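(* Let $d$ be a symmetric nonnegative function on a set $\mathcal X$ with $d(x,z)\le M(d(x,y)+d(y,z))$ for all $x,y,z\in\mathcal X$. Let $\mathcal S\subset\mathcal X$ be finite, $\mathcal C_{\mathrm{OPT}}\subset\mathcal X$ a set of $K$ centers minimizing $\sum_{x\in\mathcal S}\min_{c\in\mathcal C}d(x,c)^2$, and let $A\subseteq\mathcal S$ be one cluster of the partition of $\mathcal S$ induced by $\mathcal C_{\mathrm{OPT}}$ (points sharing the same nearest optimal center). Let $\mathcal C$ be an arbitrary set of centers, $D(a)=\min_{c\in\mathcal C}d(a,c)$, and define $\Upsilon(A)=\sum_{a\in A}\min_{c\in\mathcal C}d(a,c)^2$ and $\Upsilon_{\mathrm{OPT}}(A)=\sum_{a\in A}\min_{c\in\mathcal C_{\mathrm{OPT}}}d(a,c)^2$. If a random center $a_0\in A$ is added to $\mathcal C$, chosen with probability $D(a_0)^2/\sum_{a\in A}D(a)^2$, then, with $\Upsilon(A)$ computed for the enlarged center set, $\mathbb E[\Upsilon(A)]\le16M^4\,\Upsilon_{\mathrm{OPT}}(A)$. *)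

theory Defs
  imports Main "HOL.Real"
begin

definition Dmin :: "('a \<Rightarrow> 'a \<Rightarrow> real) \<Rightarrow> 'a set \<Rightarrow> 'a \<Rightarrow> real" where
  "Dmin d C x = Min ((\<lambda>c. d x c) ` C)"

definition Upsilon :: "('a \<Rightarrow> 'a \<Rightarrow> real) \<Rightarrow> 'a set \<Rightarrow> 'a set \<Rightarrow> real" where
  "Upsilon d C A = (\<Sum>a\<in>A. (Dmin d C a)^2)"

definition expected_Upsilon :: "('a \<Rightarrow> 'a \<Rightarrow> real) \<Rightarrow> 'a set \<Rightarrow> 'a set \<Rightarrow> real" where
  "expected_Upsilon d C A =
     (\<Sum>a0\<in>A. ((Dmin d C a0)^2 / (\<Sum>a\<in>A. (Dmin d C a)^2)) * Upsilon d (insert a0 C) A)"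

end

theory Submission
  imports Defs
begin

lemma Dmin_insert:
  assumes "finite C" "C \<noteq> {}"
  shows "Dmin d (insert x C) a = min (d a x) (Dmin d C a)"
  using assms by (simp add: Dmin_def Min_insert)

lemma Dmin_le:
  assumes "finite C" "c \<in> C"
  shows "Dmin d C a \<le> d a c"
  using assms by (simp add: Dmin_def)

lemma Dmin_attained:
  assumes "finite C" "C \<noteq> {}"
  shows "\<exists>c\<in>C. Dmin d C a = d a c"
proof -
  have "Min ((\<lambda>c. d a c) ` C) \<in> (\<lambda>c. d a c) ` C" using assms by (intro Min_in) auto
  thus ?thesis unfolding Dmin_def by auto
qed

lemma sq_tri:
  fixes M x y z :: real
  assumes "0 \<le> x" "x \<le> M * (y + z)"
  shows "x^2 \<le> 2 * M^2 * (y^2 + z^2)"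
proof -
  have "x^2 \<le> (M * (y + z))^2" using assms by (intro power_mono) auto
  also have "\<dots> = M^2 * (y+z)^2" by (simp add: power_mult_distrib)
  also have "\<dots> \<le> M^2 * (2 * (y^2 + z^2))"
  proof -
    have "0 \<le> (y-z)^2" by simp
    hence "(y+z)^2 \<le> 2 * (y^2 + z^2)" by (simp add: power2_eq_square algebra_simps)
    thus ?thesis by (intro mult_left_mono) auto
  qed
  finally show ?thesis by (simp add: algebra_simps)
qed

theorem lemma3:
  fixes d :: "'a \<Rightarrow> 'a \<Rightarrow> real" and M :: real and K :: nat
    and S Copt C A :: "'a set" and assign :: "'a \<Rightarrow> 'a" and c0 :: 'a
  assumes sym: "\<And>x y. d x y = d y x"
    and nonneg: "\<And>x y. d x y \<ge> 0"
    and relaxed_tri: "\<And>x y z. d x z \<le> M * (d x y + d y z)"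
    and finS: "finite S"
    and Copt_fin: "finite Copt" and Copt_card: "card Copt = K"
    and Copt_opt: "\<And>C'. finite C' \<Longrightarrow> card C' = K \<Longrightarrow> Upsilon d Copt S \<le> Upsilon d C' S"
    and assign_in: "\<And>x. x \<in> S \<Longrightarrow> assign x \<in> Copt"
    and assign_nearest: "\<And>x. x \<in> S \<Longrightarrow> d x (assign x) = Dmin d Copt x"
    and c0: "c0 \<in> Copt"
    and A_def: "A = {x \<in> S. assign x = c0}"
    and C_fin: "finite C" and C_ne: "C \<noteq> {}"
  shows "expected_Upsilon d C A \<le> 16 * M^4 * Upsilon d Copt A"
proof -
  define D where "D a = Dmin d C a" for a
  define T where "T = (\<Sum>a\<in>A. (D a)^2)"
  define V where "V = (\<Sum>a\<in>A. (d a c0)^2)"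
  define E where "E b = (\<Sum>a\<in>A. (d a b)^2)" for b
  define U where "U b = Upsilon d (insert b C) A" for b
  define n where "n = card A"
  have finA: "finite A" using finS A_def by simp
  have D_nn: "D a \<ge> 0" for a
    using Dmin_attained[OF C_fin C_ne, of d a] nonneg unfolding D_def by auto
  have Vopt: "Upsilon d Copt A = V"
    unfolding Upsilon_def V_def
    by (rule sum.cong) (auto simp: A_def assign_nearest[symmetric])
  have V_nn: "V \<ge> 0" unfolding V_def by (auto intro: sum_nonneg)
  have T_nn: "T \<ge> 0" unfolding T_def by (auto intro: sum_nonneg)
  have exp_eq: "expected_Upsilon d C A = (\<Sum>b\<in>A. (D b)^2 / T * U b)"
    unfolding expected_Upsilon_def D_def T_def U_def by simp
  show ?thesis
  proof (cases "T = 0 \<or> A = {}")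
    case True
    then have "expected_Upsilon d C A = 0" unfolding exp_eq by auto
    moreover have "16 * M^4 * V \<ge> 0" using V_nn by (simp add: zero_le_even_power)
    ultimately show ?thesis using Vopt by simp
  next
    case False
    then have Tpos: "T > 0" and Ane: "A \<noteq> {}" using T_nn by auto
    have npos: "real n > 0" using finA Ane n_def by (simp add: card_gt_0_iff)
    have U_eq: "U b = (\<Sum>a\<in>A. (min (d a b) (D a))^2)" for b
      unfolding U_def Upsilon_def D_def using Dmin_insert[OF C_fin C_ne] by simp
    have U_nn: "U b \<ge> 0" for b unfolding U_eq by (auto intro: sum_nonneg)
    have U_T: "U b \<le> T" for b
      unfolding U_eq T_def
      by (intro sum_mono power_mono) (auto simp: nonneg D_nn)
    have U_E: "U b \<le> E b" for b
      unfolding U_eq E_def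
      by (intro sum_mono power_mono) (auto simp: nonneg D_nn)
    have Db: "real n * (D b)^2 \<le> 2 * M^2 * (T + E b)" if "b \<in> A" for b
    proof -
      have "(D b)^2 \<le> 2 * M^2 * ((D a)^2 + (d a b)^2)" for a
      proof -
        obtain c where c: "c \<in> C" "D a = d a c"
          using Dmin_attained[OF C_fin C_ne, of d a] D_def by auto
        have "D b \<le> d b c" unfolding D_def by (rule Dmin_le[OF C_fin c(1)])
        also have "\<dots> \<le> M * (d b a + d a c)" by (rule relaxed_tri)
        finally have "D b \<le> M * (D a + d a b)" using c sym by (simp add: add.commute)
        thus ?thesis using sq_tri[OF D_nn] by simp
      qed
      hence "(\<Sum>a\<in>A. (D b)^2) \<le> (\<Sum>a\<in>A. 2 * M^2 * ((D a)^2 + (d a b)^2))"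
        by (intro sum_mono) auto
      thus ?thesis
        by (simp add: n_def T_def E_def sum_distrib_left[symmetric] sum.distrib)
    qed
    have termb: "(D b)^2 / T * U b \<le> 4 * M^2 / real n * E b" if "b \<in> A" for b
    proof -
      have "real n * ((D b)^2 / T * U b) = (real n * (D b)^2) * U b / T" by simp
      also have "\<dots> \<le> (2 * M^2 * (T + E b)) * U b / T"
        using Db[OF that] U_nn Tpos
        by (intro divide_right_mono mult_right_mono) auto
      also have "\<dots> = 2 * M^2 * (U b + E b * (U b / T))" using Tpos
        by (simp add: field_simps)
      also have "\<dots> \<le> 2 * M^2 * (E b + E b * 1)"
      proof -
        have "U b / T \<le> 1" using U_T Tpos by simp
        moreover have "E b \<ge> 0" unfolding E_def by (auto intro: sum_nonneg)
        ultimately have "E b * (U b / T) \<le> E b * 1" by (intro mult_left_mono) auto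
        thus ?thesis using U_E[of b] by (intro mult_left_mono) auto
      qed
      finally have "real n * ((D b)^2 / T * U b) \<le> 4 * M^2 * E b" by simp
      thus ?thesis using npos by (simp add: field_simps)
    qed
    have Esum: "(\<Sum>b\<in>A. E b) \<le> 4 * M^2 * real n * V"
    proof -
      have "(\<Sum>b\<in>A. E b) \<le> (\<Sum>b\<in>A. \<Sum>a\<in>A. 2 * M^2 * ((d a c0)^2 + (d b c0)^2))"
        unfolding E_def
      proof (intro sum_mono)
        fix b a
        have "d a b \<le> M * (d a c0 + d c0 b)" by (rule relaxed_tri)
        thus "(d a b)^2 \<le> 2 * M^2 * ((d a c0)^2 + (d b c0)^2)"
          using sq_tri[OF nonneg] sym by metis
      qed
      also have "\<dots> = 4 * M^2 * real n * V"
        by (simp add: sum.distrib sum_distrib_left[symmetric] V_def n_def algebra_simps)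
      finally show ?thesis .
    qed
    have "expected_Upsilon d C A \<le> (\<Sum>b\<in>A. 4 * M^2 / real n * E b)"
      unfolding exp_eq by (intro sum_mono termb)
    also have "\<dots> = 4 * M^2 / real n * (\<Sum>b\<in>A. E b)" by (simp add: sum_distrib_left)
    also have "\<dots> \<le> 4 * M^2 / real n * (4 * M^2 * real n * V)"
      using Esum npos by (intro mult_left_mono) auto
    also have "\<dots> = 16 * M^4 * V" using npos by (simp add: field_simps power2_eq_square power4_eq_xxxx)
    finally show ?thesis using Vopt by simp
  qed
qed

end
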